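(* Let $(X,\le)$ be a non-empty strictly inductive poset, $f:X\to X$ and $a_0\in X$, let $(a_k)_k$ be the transfinite sequence of iterates of $f$ from $a_0$, $A=\{a_k\mid k\text{ an ordinal}\}$, and let $N$ be the smallest subset of $X$ containing $a_0$, closed under $f$, and closed under non-empty least upper bounds. If the sequence $(a_k)_k$ is monotone (i.e. $a_k\le a_l$ whenever $k\le l$), then $N\subseteq A$.
   Context: A poset is strictly inductive if every non-empty chain has a least upper bound $\mathrm{lub}$ in $X$. The transfinite iterates are defined by $a_0$ given, $a_{k+1}=f(a_k)$, and $a_l=\mathrm{lub}\{a_k\mid k<l\}$ for limit ordinals $l$. A set $Z\subseteq X$ is closed under $f$ if $f(z)\in Z$ for all $z\in Z$, and closed under non-empty least upper bounds if for every non-empty $P\subseteq Z$, $\mathrm{lub}(P)$ exists and belongs to $Z$. *)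

theory Defs
  imports Main
begin

text \<open>The poset (X, \<le>) is the whole carrier of a type of class order (so X is non-empty).\<close>

definition is_lub :: "'a::order set \<Rightarrow> 'a \<Rightarrow> bool" where
  "is_lub P u \<longleftrightarrow> (\<forall>p\<in>P. p \<le> u) \<and> (\<forall>v. (\<forall>p\<in>P. p \<le> v) \<longrightarrow> u \<le> v)"

definition strictly_inductive :: "'a::order itself \<Rightarrow> bool" where
  "strictly_inductive _ \<longleftrightarrow>
     (\<forall>C::'a set. C \<noteq> {} \<and> Complete_Partial_Order.chain (\<le>) C \<longrightarrow> (\<exists>u. is_lub C u))"

definition closed_under_fun :: "('a \<Rightarrow> 'a) \<Rightarrow> 'a set \<Rightarrow> bool" where
  "closed_under_fun f Z \<longleftrightarrow> (\<forall>z\<in>Z. f z \<in> Z)"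

definition closed_under_lubs :: "'a::order set \<Rightarrow> bool" where
  "closed_under_lubs Z \<longleftrightarrow> (\<forall>P. P \<noteq> {} \<and> P \<subseteq> Z \<longrightarrow> (\<exists>u. is_lub P u \<and> u \<in> Z))"

definition is_successor_of :: "'i::wellorder \<Rightarrow> 'i \<Rightarrow> bool" where
  "is_successor_of k j \<longleftrightarrow> j < k \<and> (\<forall>m. j < m \<longrightarrow> k \<le> m)"

definition is_limit :: "'i::wellorder \<Rightarrow> bool" where
  "is_limit k \<longleftrightarrow> (\<exists>j. j < k) \<and> \<not> (\<exists>j. is_successor_of k j)"

definition transfinite_iterates ::
    "('a::order \<Rightarrow> 'a) \<Rightarrow> 'a \<Rightarrow> ('i::wellorder \<Rightarrow> 'a) \<Rightarrow> bool" where
  "transfinite_iterates f a0 a \<longleftrightarrow>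
     (\<forall>k. (\<forall>j. \<not> j < k) \<longrightarrow> a k = a0) \<and>
     (\<forall>k j. is_successor_of k j \<longrightarrow> a k = f (a j)) \<and>
     (\<forall>k. is_limit k \<longrightarrow> is_lub {a j | j. j < k} (a k))"

end

theory Submission
  imports Defs
begin

lemma succ_exists:
  fixes j :: "'i::wellorder"
  assumes "j < m"
  shows "is_successor_of (LEAST x. j < x) j"
  unfolding is_successor_of_def
  using assms by (metis LeastI Least_le)

lemma trichot:
  fixes m :: "'i::wellorder"
  shows "(\<forall>j. \<not> j < m) \<or> (\<exists>j. is_successor_of m j) \<or> is_limit m"
  unfolding is_limit_def by blast

theorem mainTheorem6:
  fixes f :: "'a::order \<Rightarrow> 'a" and a0 :: 'a
    and a :: "'i::wellorder \<Rightarrow> 'a" and N :: "'a set"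
  assumes ind: "strictly_inductive TYPE('a)"
    and large_index: "\<not> (\<exists>g :: 'i \<Rightarrow> 'a. inj g)"
    and iter: "transfinite_iterates f a0 a"
    and N_a0: "a0 \<in> N"
    and N_f: "closed_under_fun f N"
    and N_lub: "closed_under_lubs N"
    and N_least: "\<And>Z. a0 \<in> Z \<Longrightarrow> closed_under_fun f Z \<Longrightarrow> closed_under_lubs Z \<Longrightarrow> N \<subseteq> Z"
    and mono_a: "\<And>k l. k \<le> l \<Longrightarrow> a k \<le> a l"
  shows "N \<subseteq> range a"
proof -
  have bot: "\<And>k. (\<forall>j. \<not> j < k) \<Longrightarrow> a k = a0"
   and suc: "\<And>k j. is_successor_of k j \<Longrightarrow> a k = f (a j)"
   and lim: "\<And>k. is_limit k \<Longrightarrow> is_lub {a j | j. j < k} (a k)"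
    using iter unfolding transfinite_iterates_def by blast+
  obtain k l where kl: "k < l" "a k = a l"
  proof -
    from large_index have "\<not> inj a" by blast
    then obtain x y where "x \<noteq> y" "a x = a y" unfolding inj_def by blast
    hence "x < y \<or> y < x" by (simp add: neq_iff)
    thus ?thesis using that[of x y] that[of y x] \<open>a x = a y\<close> by auto
  qed
  define s where "s = (LEAST x. k < x)"
  have ss: "is_successor_of s k" unfolding s_def using succ_exists kl(1) by blast
  have "a k \<le> a s" using ss mono_a unfolding is_successor_of_def by auto
  moreover have "a s \<le> a l" using ss kl mono_a unfolding is_successor_of_def by auto
  ultimately have "a s = a k" using kl by auto
  hence fix0: "f (a k) = a k" using suc[OF ss] by simp
  have stab: "k \<le> m \<Longrightarrow> a m = a k" for m
  proof (induction m rule: less_induct)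
    case (less m)
    show ?case
    proof (cases "m = k")
      case True thus ?thesis by simp
    next
      case False
      hence km: "k < m" using less.prems by simp
      from trichot[of m] show ?thesis
      proof (elim disjE)
        assume "\<forall>j. \<not> j < m" thus ?thesis using km by blast
      next
        assume "\<exists>j. is_successor_of m j"
        then obtain j where j: "is_successor_of m j" by blast
        have "k \<le> j"
        proof (rule ccontr)
          assume "\<not> k \<le> j" hence "j < k" by simp
          hence "m \<le> k" using j unfolding is_successor_of_def by blast
          thus False using km by simp
        qed
        moreover have "j < m" using j unfolding is_successor_of_def by blast
        ultimately have "a j = a k" using less.IH by blast
        thus ?thesis using suc[OF j] fix0 by simp
      next
        assume "is_limit m"
        hence L: "is_lub {a j | j. j < m} (a m)" by (rule lim)
        have "a k \<le> a m" using L km unfolding is_lub_def by blast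
        moreover have "a m \<le> a k"
        proof -
          have "\<forall>p\<in>{a j | j. j < m}. p \<le> a k"
          proof
            fix p assume "p \<in> {a j | j. j < m}"
            then obtain j where j: "p = a j" "j < m" by blast
            show "p \<le> a k"
            proof (cases "j < k")
              case True thus ?thesis using j mono_a by simp
            next
              case False thus ?thesis using j less.IH[of j] by simp
            qed
          qed
          thus ?thesis using L unfolding is_lub_def by blast
        qed
        ultimately show ?thesis by simp
      qed
    qed
  qed
  have maxk: "a j \<le> a k" for j
    proof (cases "j < k")
    case True thus ?thesis using mono_a[of j k] by simp
  next
    case False thus ?thesis using stab[of j] by simp
  qed
  have "a0 \<in> range a"
  proof -
    have "a (LEAST x. True) = a0" by (rule bot) (use Least_le[of "\<lambda>x. True"] not_less in blast)
    thus ?thesis by (metis rangeI)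
  qed
  moreover have "closed_under_fun f (range a)"
    unfolding closed_under_fun_def
  proof
    fix z assume "z \<in> range a"
    then obtain j where z: "z = a j" by blast
    show "f z \<in> range a"
    proof (cases "\<exists>m. j < m")
      case True
      then obtain m where "j < m" by blast
      from suc[OF succ_exists[OF this]] z show ?thesis by (metis rangeI)
    next
      case False
      hence "k \<le> j" using kl(1) by (meson dual_order.strict_trans not_le)
      hence "z = a k" using stab[of j] z by simp
      thus ?thesis using fix0 by simp
    qed
  qed
  moreover have "closed_under_lubs (range a)"
    unfolding closed_under_lubs_def
  proof (intro allI impI)
    fix P assume P: "P \<noteq> {} \<and> P \<subseteq> range a"
    define m where "m = (LEAST x. \<forall>p\<in>P. p \<le> a x)"
    have ub0: "\<forall>p\<in>P. p \<le> a k" using P maxk by blast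
    have ub: "\<forall>p\<in>P. p \<le> a m" unfolding m_def using ub0 by (rule LeastI)
    have minm: "\<And>x. \<forall>p\<in>P. p \<le> a x \<Longrightarrow> m \<le> x" unfolding m_def by (rule Least_le)
    have "is_lub P (a m)"
      unfolding is_lub_def
    proof (intro conjI allI impI)
      show "\<forall>p\<in>P. p \<le> a m" by (rule ub)
    next
      fix v assume v: "\<forall>p\<in>P. p \<le> v"
      from trichot[of m] show "a m \<le> v"
      proof (elim disjE)
        assume b: "\<forall>j. \<not> j < m"
        obtain p where p: "p \<in> P" using P by blast
        then obtain i where "p = a i" using P by blast
        hence "a m \<le> p" using b mono_a by (simp add: not_less)
        thus ?thesis using v p by (blast intro: order.trans)
      next
        assume "\<exists>j. is_successor_of m j"
        then obtain j where j: "is_successor_of m j" by blast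
        have "\<not> (\<forall>p\<in>P. p \<le> a j)"
          using minm j unfolding is_successor_of_def by fastforce
        then obtain p where p: "p \<in> P" "\<not> p \<le> a j" by blast
        then obtain i where i: "p = a i" using P by blast
        have "j < i" using p i mono_a[of i j] not_less by blast
        hence "m \<le> i" using j unfolding is_successor_of_def by blast
        hence "a m \<le> p" using i mono_a by simp
        thus ?thesis using v p by (blast intro: order.trans)
      next
        assume "is_limit m"
        hence L: "is_lub {a j | j. j < m} (a m)" by (rule lim)
        have "\<forall>q\<in>{a j | j. j < m}. q \<le> v"
        proof
          fix q assume "q \<in> {a j | j. j < m}"
          then obtain j where j: "q = a j" "j < m" by blast
          have "\<not> (\<forall>p\<in>P. p \<le> a j)" using minm j(2) by fastforce
          then obtain p where p: "p \<in> P" "\<not> p \<le> a j" by blast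
          then obtain i where i: "p = a i" using P by blast
          have "j < i" using p i mono_a[of i j] not_less by blast
          hence "a j \<le> p" using i mono_a by simp
          thus "q \<le> v" using v p j by (blast intro: order.trans)
        qed
        thus ?thesis using L unfolding is_lub_def by blast
      qed
    qed
    thus "\<exists>u. is_lub P u \<and> u \<in> range a" by blast
  qed
  ultimately show ?thesis using N_least by blast
qed

end
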